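(* Let $k,n,j\in\mathbb N_0$ and $Y\in\mathcal H^d_n$. If $j\ge k$, then for every $\xi\in\mathbb S^{d-1}$, $$\Delta^k\big[(1-\|x\|^2)^jY(x)\big]\Big|_{x=\xi}=4^k(-j)_k(-k)_{j-k}\frac{(n+\frac d2)_k}{(n+\frac d2)_{j-k}}\,Y(\xi),$$ and if $j<k$ the left-hand side is $0$.
   Context: $\mathcal H^d_n$ is the space of homogeneous harmonic polynomials of degree $n$ in $d$ variables, $\mathbb S^{d-1}$ the unit sphere, $\Delta$ the Laplacian in $\mathbb R^d$, and $(a)_0=1$, $(a)_m=a(a+1)\cdots(a+m-1)$ for $m\in\mathbb N$. *)

theory Defs
  imports "HOL-Analysis.Analysis"
begin

definition partial_deriv :: "'d::finite \<Rightarrow> (real^'d \<Rightarrow> real) \<Rightarrow> real^'d \<Rightarrow> real" where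
  "partial_deriv i f x = deriv (\<lambda>t. f (x + t *\<^sub>R axis i 1)) 0"

definition laplacian :: "(real^'d::finite \<Rightarrow> real) \<Rightarrow> real^'d \<Rightarrow> real" where
  "laplacian f = (\<lambda>x. \<Sum>i\<in>UNIV. partial_deriv i (partial_deriv i f) x)"

definition hom_poly :: "nat \<Rightarrow> (real^'d::finite \<Rightarrow> real) \<Rightarrow> bool" where
  "hom_poly n Y \<longleftrightarrow> (\<exists>(A :: ('d \<Rightarrow> nat) set) c. finite A \<and> (\<forall>\<alpha>\<in>A. (\<Sum>i\<in>UNIV. \<alpha> i) = n) \<and>
      (\<forall>x. Y x = (\<Sum>\<alpha>\<in>A. c \<alpha> * (\<Prod>i\<in>UNIV. (x $ i) ^ \<alpha> i))))"

definition hom_harmonic :: "nat \<Rightarrow> (real^'d::finite \<Rightarrow> real) \<Rightarrow> bool" where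
  "hom_harmonic n Y \<longleftrightarrow> hom_poly n Y \<and> (\<forall>x. laplacian Y x = 0)"

end

theory Submission
  imports Defs "HOL-Computational_Algebra.Polynomial"
begin


inductive_set PP :: "(real^'d::finite \<Rightarrow> real) set" where
  pconst: "(\<lambda>x. c) \<in> PP"
| pcoord: "(\<lambda>x. x $ i) \<in> PP"
| padd: "f \<in> PP \<Longrightarrow> g \<in> PP \<Longrightarrow> (\<lambda>x. f x + g x) \<in> PP"
| pmult: "f \<in> PP \<Longrightarrow> g \<in> PP \<Longrightarrow> (\<lambda>x. f x * g x) \<in> PP"

lemma PP_deriv:
  fixes f :: "real^'d::finite \<Rightarrow> real"
  assumes "f \<in> PP"
  shows "\<exists>G. (\<forall>i. G i \<in> PP) \<and> (\<forall>x. (f has_derivative (\<lambda>h. \<Sum>i\<in>UNIV. h$i * G i x)) (at x))"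
  using assms
proof (induction rule: PP.induct)
  case (pconst c)
  show ?case
    by (rule exI[of _ "\<lambda>i x. 0"]) (auto intro: PP.pconst)
next
  case (pcoord j)
  have "(\<lambda>h::real^'d. \<Sum>i\<in>UNIV. h$i * (if i = j then 1 else 0)) = (\<lambda>h. h $ j)"
    by (simp add: if_distrib cong: if_cong)
  moreover have "\<And>x. ((\<lambda>x::real^'d. x $ j) has_derivative (\<lambda>h. h $ j)) (at x)"
    by (simp add: bounded_linear_imp_has_derivative bounded_linear_vec_nth)
  ultimately show ?case
    by (intro exI[of _ "\<lambda>i x. if i = j then 1 else 0"]) (auto intro: PP.pconst)
next
  case (padd f g)
  then obtain F G where F: "\<forall>i. F i \<in> PP" "\<forall>x. (f has_derivative (\<lambda>h. \<Sum>i\<in>UNIV. h$i * F i x)) (at x)"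
    and G: "\<forall>i. G i \<in> PP" "\<forall>x. (g has_derivative (\<lambda>h. \<Sum>i\<in>UNIV. h$i * G i x)) (at x)" by blast
  show ?case
  proof (intro exI[of _ "\<lambda>i x. F i x + G i x"] conjI allI)
    show "(\<lambda>x. F i x + G i x) \<in> PP" for i using F G by (auto intro: PP.padd)
    fix x
    have "((\<lambda>x. f x + g x) has_derivative (\<lambda>h. (\<Sum>i\<in>UNIV. h$i * F i x) + (\<Sum>i\<in>UNIV. h$i * G i x))) (at x)"
      using F G by (intro has_derivative_add) auto
    then show "((\<lambda>x. f x + g x) has_derivative (\<lambda>h. \<Sum>i\<in>UNIV. h$i * (F i x + G i x))) (at x)"
      by (simp add: distrib_left sum.distrib)
  qed
next
  case (pmult f g)
  then obtain F G where F: "\<forall>i. F i \<in> PP" "\<forall>x. (f has_derivative (\<lambda>h. \<Sum>i\<in>UNIV. h$i * F i x)) (at x)"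
    and G: "\<forall>i. G i \<in> PP" "\<forall>x. (g has_derivative (\<lambda>h. \<Sum>i\<in>UNIV. h$i * G i x)) (at x)" by blast
  show ?case
  proof (intro exI[of _ "\<lambda>i x. f x * G i x + F i x * g x"] conjI allI)
    show "(\<lambda>x. f x * G i x + F i x * g x) \<in> PP" for i
      using F G pmult.hyps by (intro PP.padd PP.pmult) auto
    fix x
    have "((\<lambda>x. f x * g x) has_derivative (\<lambda>h. f x * (\<Sum>i\<in>UNIV. h$i * G i x) + (\<Sum>i\<in>UNIV. h$i * F i x) * g x)) (at x)"
      using F G by (intro has_derivative_mult) auto
    then show "((\<lambda>x. f x * g x) has_derivative (\<lambda>h. \<Sum>i\<in>UNIV. h$i * (f x * G i x + F i x * g x))) (at x)"
      by (simp add: distrib_left sum.distrib sum_distrib_left sum_distrib_right algebra_simps)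
  qed
qed

lemma PP_line:
  assumes "(f has_derivative (\<lambda>h. \<Sum>i\<in>UNIV. h$i * G i x)) (at x)"
  shows "((\<lambda>t. f (x + t *\<^sub>R axis i 1)) has_real_derivative G i x) (at 0)"
proof -
  have c: "((\<lambda>t::real. x + t *\<^sub>R axis i 1) has_derivative (\<lambda>t. t *\<^sub>R axis i (1::real))) (at 0)"
    by (auto intro!: derivative_eq_intros)
  have f: "(f has_derivative (\<lambda>h. \<Sum>i\<in>UNIV. h$i * G i x)) (at (x + 0 *\<^sub>R axis i 1))"
    using assms by simp
  have "((\<lambda>t. f (x + t *\<^sub>R axis i 1)) has_derivative (\<lambda>t. \<Sum>j\<in>UNIV. (t *\<^sub>R axis i 1)$j * G j x)) (at 0)"
    using has_derivative_compose[OF c f] by (simp add: o_def)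
  moreover have "(\<lambda>t. \<Sum>j\<in>UNIV. (t *\<^sub>R axis i (1::real))$j * G j x) = (\<lambda>t. G i x * t)"
  proof
    fix t
    have "(t *\<^sub>R axis i (1::real))$j * G j x = (if j = i then t * G i x else 0)" for j
      by (auto simp: axis_def)
    then show "(\<Sum>j\<in>UNIV. (t *\<^sub>R axis i (1::real))$j * G j x) = G i x * t" by simp
  qed
  ultimately show ?thesis by (simp add: has_field_derivative_def)
qed

lemma PP_pd:
  assumes "f \<in> PP"
  shows "partial_deriv i f \<in> PP" "((\<lambda>t. f (x + t *\<^sub>R axis i 1)) has_real_derivative partial_deriv i f x) (at 0)"
proof -
  obtain G where G: "\<forall>i. G i \<in> PP" "\<forall>x. (f has_derivative (\<lambda>h. \<Sum>i\<in>UNIV. h$i * G i x)) (at x)"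
    using PP_deriv[OF assms] by blast
  have e: "partial_deriv i f = G i"
    unfolding partial_deriv_def
  proof (rule ext)
    fix y show "deriv (\<lambda>t. f (y + t *\<^sub>R axis i 1)) 0 = G i y"
      using PP_line[where G=G and x=y, OF G(2)[rule_format, of y]] by (rule DERIV_imp_deriv)
  qed
  show "partial_deriv i f \<in> PP" using e G by simp
  show "((\<lambda>t. f (x + t *\<^sub>R axis i 1)) has_real_derivative partial_deriv i f x) (at 0)"
    using e PP_line[where G=G and x=x, OF G(2)[rule_format, of x]] by simp
qed

lemma PP_euler:
  assumes "f \<in> PP" and hom: "\<And>s x. f (s *\<^sub>R x) = s ^ n * f x"
  shows "(\<Sum>i\<in>UNIV. x $ i * partial_deriv i f x) = real n * f x"
proof -
  obtain G where G: "\<forall>i. G i \<in> PP" "\<forall>x. (f has_derivative (\<lambda>h. \<Sum>i\<in>UNIV. h$i * G i x)) (at x)"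
    using PP_deriv[OF assms(1)] by blast
  have e: "partial_deriv i f = G i" for i
    unfolding partial_deriv_def
  proof (rule ext)
    fix y show "deriv (\<lambda>t. f (y + t *\<^sub>R axis i 1)) 0 = G i y"
      using PP_line[where G=G and x=y, OF G(2)[rule_format, of y]] by (rule DERIV_imp_deriv)
  qed
  have c: "((\<lambda>s::real. s *\<^sub>R x) has_derivative (\<lambda>s. s *\<^sub>R x)) (at 1)"
    by (auto intro!: derivative_eq_intros)
  have ff: "(f has_derivative (\<lambda>h. \<Sum>i\<in>UNIV. h$i * G i x)) (at (1 *\<^sub>R x))"
    using G by simp
  have "((\<lambda>s. f (s *\<^sub>R x)) has_derivative (\<lambda>s. \<Sum>i\<in>UNIV. (s *\<^sub>R x)$i * G i x)) (at 1)"
    using has_derivative_compose[OF c ff] by (simp add: o_def)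
  moreover have "(\<lambda>s. \<Sum>i\<in>UNIV. (s *\<^sub>R x)$i * G i x) = (\<lambda>s. (\<Sum>i\<in>UNIV. x$i * G i x) * s)"
    by (auto simp: sum_distrib_left sum_distrib_right algebra_simps)
  ultimately have d1: "((\<lambda>s. f (s *\<^sub>R x)) has_real_derivative (\<Sum>i\<in>UNIV. x$i * G i x)) (at 1)"
    by (simp add: has_field_derivative_def)
  have d2: "((\<lambda>s. f (s *\<^sub>R x)) has_real_derivative real n * f x) (at 1)"
  proof -
    have "((\<lambda>s::real. s ^ n * f x) has_real_derivative (real n * 1 ^ (n - 1) * 1) * f x) (at 1)"
      by (auto intro!: derivative_eq_intros)
    then show ?thesis by (simp add: hom)
  qed
  show ?thesis using DERIV_unique[OF d1 d2] e by simp
qed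



lemma PP_sum: "finite A \<Longrightarrow> (\<And>a. a \<in> A \<Longrightarrow> F a \<in> PP) \<Longrightarrow> (\<lambda>x. \<Sum>a\<in>A. F a x) \<in> PP"
proof (induction A rule: finite_induct)
  case empty then show ?case using PP.pconst[of 0] by simp
next
  case (insert a A) then show ?case by (simp add: PP.padd)
qed

lemma PP_prod: "finite A \<Longrightarrow> (\<And>a. a \<in> A \<Longrightarrow> F a \<in> PP) \<Longrightarrow> (\<lambda>x. \<Prod>a\<in>A. F a x) \<in> PP"
proof (induction A rule: finite_induct)
  case empty then show ?case using PP.pconst[of 1] by simp
next
  case (insert a A) then show ?case by (simp add: PP.pmult)
qed

lemma PP_power: "f \<in> PP \<Longrightarrow> (\<lambda>x. f x ^ m) \<in> PP"
  by (induction m) (auto intro: PP.pmult PP.pconst[of 1, simplified])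

lemma hom_poly_PP:
  fixes Y :: "real^'d::finite \<Rightarrow> real"
  assumes "hom_poly n Y"
  shows "Y \<in> PP" "Y (s *\<^sub>R x) = s ^ n * Y x"
proof -
  obtain A c where A: "finite A" "\<forall>\<alpha>\<in>A. (\<Sum>i\<in>UNIV. \<alpha> i) = n"
    "\<forall>x. Y x = (\<Sum>\<alpha>\<in>A. c \<alpha> * (\<Prod>i\<in>UNIV. (x $ i) ^ \<alpha> i))"
    using assms unfolding hom_poly_def by blast
  have Ye: "Y = (\<lambda>x. \<Sum>\<alpha>\<in>A. c \<alpha> * (\<Prod>i\<in>UNIV. (x $ i) ^ \<alpha> i))" using A by auto
  show "Y \<in> PP" unfolding Ye
    by (intro PP_sum A PP.pmult PP.pconst PP_prod PP_power PP.pcoord) auto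
  have "c \<alpha> * (\<Prod>i\<in>UNIV. ((s *\<^sub>R x) $ i) ^ \<alpha> i) = s ^ n * (c \<alpha> * (\<Prod>i\<in>UNIV. (x $ i) ^ \<alpha> i))"
    if "\<alpha> \<in> A" for \<alpha>
  proof -
    have "(\<Prod>i\<in>UNIV. ((s *\<^sub>R x) $ i) ^ \<alpha> i) = (\<Prod>i\<in>UNIV. s ^ \<alpha> i) * (\<Prod>i\<in>UNIV. (x $ i) ^ \<alpha> i)"
      by (simp add: power_mult_distrib prod.distrib)
    also have "(\<Prod>i\<in>UNIV. s ^ \<alpha> i) = s ^ n" using A(2) that by (metis power_sum)
    finally show ?thesis by simp
  qed
  then have eq: "(\<Sum>\<alpha>\<in>A. c \<alpha> * (\<Prod>i\<in>UNIV. ((s *\<^sub>R x) $ i) ^ \<alpha> i)) = (\<Sum>\<alpha>\<in>A. s ^ n * (c \<alpha> * (\<Prod>i\<in>UNIV. (x $ i) ^ \<alpha> i)))"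
    by (rule sum.cong[OF refl])
  show "Y (s *\<^sub>R x) = s ^ n * Y x" unfolding Ye using eq by (simp only: sum_distrib_left)
qed

lemma line_rho:
  fixes x :: "real^'d::finite"
  shows "(norm (x + t *\<^sub>R axis i 1))\<^sup>2 = (norm x)\<^sup>2 + 2 * t * x $ i + t\<^sup>2"
  unfolding power2_norm_eq_inner by (simp add: inner_add inner_axis inner_commute algebra_simps power2_eq_square)

lemma line_poly_rho:
  fixes x :: "real^'d::finite"
  shows "((\<lambda>t. poly g ((norm (x + t *\<^sub>R axis i 1))\<^sup>2)) has_real_derivative
           poly (pderiv g) ((norm x)\<^sup>2) * (2 * x $ i)) (at 0)"
proof -
  have 1: "((\<lambda>t. (norm x)\<^sup>2 + 2 * t * x $ i + t\<^sup>2) has_real_derivative 2 * x $ i) (at 0)"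
    by (auto intro!: derivative_eq_intros)
  have 2: "(poly g has_real_derivative poly (pderiv g) ((norm x)\<^sup>2 + 2 * 0 * x $ i + 0\<^sup>2))
      (at ((norm x)\<^sup>2 + 2 * 0 * x $ i + 0\<^sup>2))" by (rule poly_DERIV)
  show ?thesis using DERIV_chain2[OF 2 1] by (simp add: line_rho)
qed

definition Lop :: "real \<Rightarrow> real poly \<Rightarrow> real poly" where
  "Lop b g = smult 4 ([:0,1:] * pderiv (pderiv g)) + smult (4 * b) (pderiv g)"

locale harm =
  fixes Y :: "real^'d::finite \<Rightarrow> real" and n :: nat
  assumes hh: "hom_harmonic n Y"
begin

lemma YPP: "Y \<in> PP" and Yhom: "Y (s *\<^sub>R x) = s ^ n * Y x"
  using hh hom_poly_PP unfolding hom_harmonic_def by blast+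

lemma Ylap: "(\<Sum>i\<in>UNIV. partial_deriv i (partial_deriv i Y) x) = 0"
  using hh unfolding hom_harmonic_def laplacian_def by metis

lemma Yeuler: "(\<Sum>i\<in>UNIV. x $ i * partial_deriv i Y x) = real n * Y x"
  by (rule PP_euler[OF YPP Yhom])

definition Phi :: "real poly \<Rightarrow> real^'d \<Rightarrow> real" where
  "Phi g = (\<lambda>x. poly g ((norm x)\<^sup>2) * Y x)"

lemma D1: "partial_deriv i (Phi g) x =
  poly (pderiv g) ((norm x)\<^sup>2) * (2 * x $ i) * Y x + poly g ((norm x)\<^sup>2) * partial_deriv i Y x"
proof -
  have "((\<lambda>t. poly g ((norm (x + t *\<^sub>R axis i 1))\<^sup>2) * Y (x + t *\<^sub>R axis i 1)) has_real_derivative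
     poly (pderiv g) ((norm x)\<^sup>2) * (2 * x $ i) * Y (x + 0 *\<^sub>R axis i 1)
     + partial_deriv i Y x * poly g ((norm (x + 0 *\<^sub>R axis i 1))\<^sup>2)) (at 0)"
    by (rule DERIV_mult[OF line_poly_rho PP_pd(2)[OF YPP]])
  then show ?thesis unfolding partial_deriv_def Phi_def
    by (subst DERIV_imp_deriv) (auto simp: algebra_simps)
qed

lemma D2: "partial_deriv i (partial_deriv i (Phi g)) x =
  poly (pderiv (pderiv g)) ((norm x)\<^sup>2) * (4 * (x $ i)\<^sup>2) * Y x
  + 2 * poly (pderiv g) ((norm x)\<^sup>2) * Y x
  + 4 * poly (pderiv g) ((norm x)\<^sup>2) * (x $ i * partial_deriv i Y x)
  + poly g ((norm x)\<^sup>2) * partial_deriv i (partial_deriv i Y) x"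
proof -
  have e: "partial_deriv i (Phi g) = (\<lambda>x.
    poly (pderiv g) ((norm x)\<^sup>2) * (2 * x $ i) * Y x + poly g ((norm x)\<^sup>2) * partial_deriv i Y x)"
    using D1 by blast
  let ?z = "\<lambda>t. x + t *\<^sub>R axis i 1"
  have c: "((\<lambda>t. 2 * (?z t) $ i) has_real_derivative 2) (at 0)"
    by (auto simp: axis_def intro!: derivative_eq_intros)
  have "((\<lambda>t. poly (pderiv g) ((norm (?z t))\<^sup>2) * (2 * (?z t) $ i) * Y (?z t)
          + poly g ((norm (?z t))\<^sup>2) * partial_deriv i Y (?z t)) has_real_derivative
     (poly (pderiv (pderiv g)) ((norm x)\<^sup>2) * (2 * x $ i) * (2 * (?z 0) $ i) + 2 * poly (pderiv g) ((norm (?z 0))\<^sup>2))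
       * Y (?z 0) + partial_deriv i Y x * (poly (pderiv g) ((norm (?z 0))\<^sup>2) * (2 * (?z 0) $ i))
     + (poly (pderiv g) ((norm x)\<^sup>2) * (2 * x $ i) * partial_deriv i Y (?z 0)
       + partial_deriv i (partial_deriv i Y) x * poly g ((norm (?z 0))\<^sup>2))) (at 0)"
    by (intro DERIV_add DERIV_mult line_poly_rho c PP_pd(2) YPP PP_pd(1))
  then show ?thesis unfolding e unfolding partial_deriv_def
    by (subst DERIV_imp_deriv) (auto simp: algebra_simps power2_eq_square)
qed

lemma lap_Phi: "laplacian (Phi g) = Phi (Lop (real n + real CARD('d) / 2) g)"
proof
  fix x :: "real^'d"
  have sq: "(\<Sum>i\<in>UNIV. (x $ i)\<^sup>2) = (norm x)\<^sup>2"
    unfolding power2_norm_eq_inner by (simp add: inner_vec_def power2_eq_square)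
  have "laplacian (Phi g) x = (\<Sum>i\<in>UNIV. partial_deriv i (partial_deriv i (Phi g)) x)"
    by (simp add: laplacian_def)
  also have "\<dots> = poly (pderiv (pderiv g)) ((norm x)\<^sup>2) * 4 * (\<Sum>i\<in>UNIV. (x $ i)\<^sup>2) * Y x
     + 2 * real CARD('d) * poly (pderiv g) ((norm x)\<^sup>2) * Y x
     + 4 * poly (pderiv g) ((norm x)\<^sup>2) * (\<Sum>i\<in>UNIV. x $ i * partial_deriv i Y x)
     + poly g ((norm x)\<^sup>2) * (\<Sum>i\<in>UNIV. partial_deriv i (partial_deriv i Y) x)"
    unfolding D2 by (simp add: sum.distrib sum_distrib_left sum_distrib_right algebra_simps)
  also have "\<dots> = Phi (Lop (real n + real CARD('d) / 2) g) x"
    unfolding sq Yeuler Ylap Phi_def Lop_def by (simp add: algebra_simps)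
  finally show "laplacian (Phi g) x = Phi (Lop (real n + real CARD('d) / 2) g) x" .
qed

lemma lapk_Phi: "(laplacian ^^ k) (Phi g) = Phi ((Lop (real n + real CARD('d) / 2) ^^ k) g)"
  by (induction k) (auto simp: lap_Phi)

end



lemma Lop_diff: "Lop b (p - q) = Lop b p - Lop b q"
  by (simp add: Lop_def pderiv_diff algebra_simps smult_diff_right)
lemma Lop_smult: "Lop b (smult c p) = smult c (Lop b p)"
  by (simp add: Lop_def pderiv_smult algebra_simps smult_add_right)

lemma Lopk_lin: "(Lop b ^^ k) (smult c p - smult d q) = smult c ((Lop b ^^ k) p) - smult d ((Lop b ^^ k) q)"
  by (induction k) (auto simp: Lop_diff Lop_smult)

abbreviation "uu \<equiv> [:1, -1:] :: real poly"

lemma Lop_u: "Lop b (uu ^ j) = smult (4 * real j * (real j - 1)) (uu ^ (j - 2))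
   - smult (4 * real j * (real j - 1 + b)) (uu ^ (j - 1))"
proof (cases j)
  case 0 then show ?thesis by (simp add: Lop_def)
next
  case (Suc i)
  note j = Suc
  show ?thesis
  proof (cases i)
    case 0 then show ?thesis using j by (simp add: Lop_def pderiv_pCons smult_add_left)
  next
    case (Suc m)
    have d1: "pderiv (uu ^ j) = smult (- real j) (uu ^ (Suc m))"
    proof -
      have "pderiv uu = [:-1:]" by (simp add: pderiv_pCons)
      then show ?thesis unfolding j Suc pderiv_power_Suc
        by (simp del: power_Suc of_nat_Suc add: mult.commute)
    qed
    have d2: "pderiv (pderiv (uu ^ j)) = smult (real j * real (Suc m)) (uu ^ m)"
    proof -
      have "pderiv uu = [:-1:]" by (simp add: pderiv_pCons)
      then show ?thesis unfolding d1 pderiv_smult pderiv_power_Suc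
        by (simp del: power_Suc of_nat_Suc add: mult.commute)
    qed
    have x: "[:0,1:] = 1 - uu" by (simp add: one_pCons)
    have "[:0,1:] * uu ^ m = uu ^ m - uu ^ Suc m" unfolding x by (simp add: algebra_simps)
    then have "Lop b (uu ^ j) = smult (4 * (real j * real (Suc m))) (uu ^ m - uu ^ Suc m)
        + smult (4 * b * (- real j)) (uu ^ Suc m)"
      unfolding Lop_def unfolding d2 unfolding d1 by (simp del: power_Suc add: mult_smult_right)
    also have "\<dots> = smult (4 * real j * (real j - 1)) (uu ^ m)
       - smult (4 * real j * (real j - 1 + b)) (uu ^ Suc m)"
      using j Suc by (simp del: power_Suc add: smult_diff_right algebra_simps flip: smult_add_left smult_diff_left)
    finally show ?thesis using j Suc by simp
  qed
qed

definition TT :: "real \<Rightarrow> nat \<Rightarrow> nat \<Rightarrow> real" where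
  "TT b j k = poly ((Lop b ^^ k) (uu ^ j)) 1"

lemma TT0: "TT b j 0 = (if j = 0 then 1 else 0)"
  by (simp add: TT_def)

lemma TTSuc: "TT b j (Suc k) = 4 * real j * (real j - 1) * TT b (j - 2) k - 4 * real j * (real j - 1 + b) * TT b (j - 1) k"
  unfolding TT_def funpow_Suc_right o_def Lop_u Lopk_lin by simp

definition RR :: "real \<Rightarrow> nat \<Rightarrow> nat \<Rightarrow> real" where
  "RR b j k = (if k \<le> j then 4 ^ k * pochhammer (- real j) k * pochhammer (- real k) (j - k)
               * pochhammer b k / pochhammer b (j - k) else 0)"



lemma RR_rec:
  assumes b: "b > 0"
  shows "RR b j (Suc k) = 4 * real j * (real j - 1) * RR b (j - 2) k - 4 * real j * (real j - 1 + b) * RR b (j - 1) k"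
proof (cases "j \<le> k")
  case True
  then show ?thesis by (cases "j = 0") (auto simp: RR_def)
next
  case False
  then obtain m where j: "j = Suc (k + m)" by (metis add_Suc less_imp_Suc_add not_le)
  have bp: "pochhammer b i \<noteq> 0" for i using pochhammer_pos[OF b, of i] by simp
  have pj: "pochhammer (- real j) (Suc k) = - real j * pochhammer (- real (k + m)) k"
    unfolding pochhammer_rec j by (simp add: algebra_simps)
  have pb: "pochhammer b (Suc k) = (b + real k) * pochhammer b k" by (simp add: pochhammer_rec')
  show ?thesis
  proof (cases m)
    case 0
    have z: "real j * (real j - 1) * RR b (j-2) k = 0" using j 0 by (cases k) (auto simp: RR_def)
    have e: "j - Suc k = 0" "j - 1 = k" "Suc k \<le> j" "k - k = 0" using j 0 by auto
    have pj0: "pochhammer (- real j) (Suc k) = - real j * pochhammer (- real k) k" using pj 0 by simp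
    have "RR b j (Suc k) = - 4 * real j * (real j - 1 + b) * RR b (j - 1) k"
      unfolding RR_def e(1,2) using e(3)
      apply (simp only: if_True le_refl e(4) pochhammer_0 pj0 pb)
      using j 0 bp by (simp add: field_simps)
    then show ?thesis using z by simp
  next
    case (Suc m')
    let ?P = "pochhammer (- real (k + Suc m')) k"
    have pj2: "pochhammer (- real (k + m')) k = ?P * (real m' + 1) / (real k + real m' + 1)"
    proof -
      have "pochhammer (- real (k + Suc m')) (Suc k) = - real (k + Suc m') * pochhammer (- real (k + m')) k"
        unfolding pochhammer_rec by (simp add: algebra_simps)
      moreover have "pochhammer (- real (k + Suc m')) (Suc k) = (- real (k + Suc m') + real k) * ?P"
        by (rule pochhammer_rec')
      ultimately show ?thesis by (simp add: field_simps)
    qed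
    have q1: "pochhammer (- real (Suc k)) (Suc m') = - real (Suc k) * pochhammer (- real k) m'"
      unfolding pochhammer_rec by (simp add: algebra_simps)
    have q2: "pochhammer (- real k) (Suc m') = (- real k + real m') * pochhammer (- real k) m'"
      by (rule pochhammer_rec')
    have q3: "pochhammer b (Suc m') = (b + real m') * pochhammer b m'"
      by (rule pochhammer_rec')
    have e1: "j - 2 = k + m'" and e2: "j - 1 = k + Suc m'" and e3: "j - Suc k = Suc m'"
      and e4: "k + Suc m' - k = Suc m'" and e5: "k + m' - k = m'"
      using j Suc by auto
    have c1: "Suc k \<le> j" "k \<le> k + m'" "k \<le> k + Suc m'" using j by auto
    have pj': "pochhammer (- real j) (Suc k) = - real j * ?P"
      using pj Suc by simp
    have rj: "real j = real k + real m' + 2" using j Suc by simp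
    have nz: "b + real m' \<noteq> 0" "real k + real m' + 1 \<noteq> 0" using b by auto
    have r1: "RR b j (Suc k) = 4 ^ Suc k * (- real j * ?P) * (- real (Suc k) * pochhammer (- real k) m')
        * ((b + real k) * pochhammer b k) / ((b + real m') * pochhammer b m')"
      unfolding RR_def e3 if_P[OF c1(1)] pj' q1 pb q3 ..
    have r2: "RR b (j - 2) k = 4 ^ k * (?P * (real m' + 1) / (real k + real m' + 1))
        * pochhammer (- real k) m' * pochhammer b k / pochhammer b m'"
      unfolding RR_def e1 e5 if_P[OF c1(2)] pj2 ..
    have r3: "RR b (j - 1) k = 4 ^ k * ?P * ((- real k + real m') * pochhammer (- real k) m')
        * pochhammer b k / ((b + real m') * pochhammer b m')"
      unfolding RR_def e2 e4 if_P[OF c1(3)] q2 q3 ..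
    have alg: "\<And>P Q B C F D E m::real. C \<noteq> 0 \<Longrightarrow> D \<noteq> 0 \<Longrightarrow> E \<noteq> 0 \<Longrightarrow>
      4 * F * (- (E + 1) * P) * (- (E - m) * Q) * ((D - m + (E - m - 1)) * B) / (D * C)
      = 4 * (E + 1) * (E + 1 - 1) * (F * (P * (m + 1) / E) * Q * B / C)
      - 4 * (E + 1) * (E + 1 - 1 + (D - m)) * (F * P * ((- (E - m - 1) + m) * Q) * B / (D * C))"
      by (simp add: field_simps)
    have alg2: "\<And>P Q B C F::real. C \<noteq> 0 \<Longrightarrow>
      4 * F * (- (real k + real m' + 2) * P) * (- real (Suc k) * Q) * ((b + real k) * B) / ((b + real m') * C)
      = 4 * (real k + real m' + 2) * (real k + real m' + 2 - 1) * (F * (P * (real m' + 1) / (real k + real m' + 1)) * Q * B / C)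
      - 4 * (real k + real m' + 2) * (real k + real m' + 2 - 1 + b) * (F * P * ((- real k + real m') * Q) * B / ((b + real m') * C))"
    proof -
      fix P Q B C F :: real assume C: "C \<noteq> 0"
      have "b + real m' - real m' = b" "real k + real m' + 1 + 1 = real k + real m' + 2"
        "real k + real m' + 1 - real m' = real (Suc k)" "real k + real m' + 1 - real m' - 1 = real k" by auto
      with alg[where m="real m'" and D="b + real m'" and E="real k + real m' + 1" and P=P and Q=Q and B=B and C=C and F=F, OF C nz(1) nz(2)]
      show "?thesis P Q B C F" by (simp only:)
    qed
    show ?thesis unfolding r1 r2 r3 rj power_Suc by (rule alg2[OF bp])
  qed
qed



lemma TT_RR: "b > 0 \<Longrightarrow> TT b j k = RR b j k"
proof (induction k arbitrary: j)
  case 0 then show ?case by (simp add: TT0 RR_def pochhammer_0_left)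
next
  case (Suc k) then show ?case by (simp add: TTSuc RR_rec)
qed

theorem lemma3p5:
  fixes Y :: "real^'d \<Rightarrow> real" and k n j :: nat and \<xi> :: "real^'d"
  assumes "hom_harmonic n Y" and "norm \<xi> = 1"
  shows "(j \<ge> k \<longrightarrow>
           (laplacian ^^ k) (\<lambda>x. (1 - (norm x)\<^sup>2) ^ j * Y x) \<xi> =
             4 ^ k * pochhammer (- real j) k * pochhammer (- real k) (j - k)
               * pochhammer (real n + real CARD('d) / 2) k
               / pochhammer (real n + real CARD('d) / 2) (j - k) * Y \<xi>)
       \<and> (j < k \<longrightarrow> (laplacian ^^ k) (\<lambda>x. (1 - (norm x)\<^sup>2) ^ j * Y x) \<xi> = 0)"
proof -
  interpret harm Y n by (rule harm.intro[OF assms(1)])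
  define b where "b = real n + real CARD('d) / 2"
  have bpos: "b > 0" unfolding b_def by (simp add: add_nonneg_pos)
  have f: "(\<lambda>x. (1 - (norm x)\<^sup>2) ^ j * Y x) = Phi (uu ^ j)"
    unfolding Phi_def by (simp add: poly_power)
  have "(laplacian ^^ k) (\<lambda>x. (1 - (norm x)\<^sup>2) ^ j * Y x) \<xi> = TT b j k * Y \<xi>"
    unfolding f lapk_Phi TT_def b_def by (simp add: Phi_def assms(2))
  also have "\<dots> = RR b j k * Y \<xi>" using TT_RR[OF bpos] by simp
  finally have e: "(laplacian ^^ k) (\<lambda>x. (1 - (norm x)\<^sup>2) ^ j * Y x) \<xi> = RR b j k * Y \<xi>" .
  show ?thesis unfolding e RR_def b_def by simp
qed


end
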